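(* Let $P, N_{\mathrm{RF}}, N, M$ be positive integers with $N_{\mathrm{RF}}P \le N$, and let $\bar{\mathbf{A}}\in\mathbb{C}^{N_{\mathrm{RF}}P\times N}$ be a deterministic matrix all of whose entries satisfy $|\bar{\mathbf{A}}(i,j)|=\frac{1}{\sqrt{N}}$. Fix $n\in\{1,\dots,N\}$ and let $\Xi_n(m)\in\{1,\dots,N\}$, $m=1,\dots,M$, be the beam split pattern indices defined in the context. Let $\sigma^2>0$ and let $\mathbf{N}\in\mathbb{C}^{N_{\mathrm{RF}}P\times M}$ be a random matrix whose columns $\mathbf{N}(:,m)$, $m=1,\dots,M$, are mutually independent with $\mathbf{N}(:,m)\sim\mathcal{CN}(\mathbf{0}_{PN_{\mathrm{RF}}},\sigma^2\mathbf{I}_{PN_{\mathrm{RF}}})$. Let $\alpha>0$ satisfy $0.8\,\alpha^{-1/2}e^{-\alpha/2}\le 1$, set $\gamma=\sigma^2\alpha$, and define the event $$\mathcal{D}=\left\{\left|\bar{\mathbf{A}}^{H}(:,\Xi_n(m))\,\mathbf{N}(:,m)\right|^2\le\gamma\ \text{ for all } m=1,2,\dots,M\right\},$$ where $\bar{\mathbf{A}}(:,k)$ denotes the $k$-th column of $\bar{\mathbf{A}}$. Then $$\Pr\{\mathcal{D}\}\ \ge\ \left(1-0.8\,\alpha^{-\frac{1}{2}}e^{-\frac{\alpha}{2}}\right)^{M}.$$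
   Context: Setting: a wideband OFDM system with $M$ subcarriers, central frequency $f_c>0$ and bandwidth $B>0$; the $m$-th subcarrier frequency is $f_m=f_c+\frac{B}{M}\left(m-1-\frac{M-1}{2}\right)$. The angle-domain samples are $\bar{\theta}_{k}=\frac{2k-N-1}{N}$, $k=1,\dots,N$. For $n\in\{1,\dots,N\}$, the beam split pattern is the index set $\Xi_n=\bigcup_{m=1}^{M}\{(\Xi_n(m),m)\}$ where $\Xi_n(m)=\arg\min_{n_1\in\{1,\dots,N\}}\left|\frac{f_m}{f_c}\bar{\theta}_n-\bar{\theta}_{n_1}\right|$ (with any fixed tie-breaking rule). $\mathcal{CN}(\mathbf{0},\sigma^2\mathbf{I})$ denotes the circularly symmetric complex Gaussian distribution; $(\cdot)^H$ is conjugate transpose. *)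

theory Defs
  imports "HOL-Probability.Probability"
begin

definition subcarrier_freq :: "real \<Rightarrow> real \<Rightarrow> nat \<Rightarrow> nat \<Rightarrow> real" where
  "subcarrier_freq fc B M m = fc + B / real M * (real m - 1 - (real M - 1) / 2)"

definition angle_sample :: "nat \<Rightarrow> nat \<Rightarrow> real" where
  "angle_sample N k = (2 * real k - real N - 1) / real N"

text \<open>Xi is a beam split pattern for index n: for every subcarrier m, Xi m is
  an arg-min (chosen by some fixed tie-breaking rule) over {1..N}.\<close>
definition is_beam_split_pattern ::
  "real \<Rightarrow> real \<Rightarrow> nat \<Rightarrow> nat \<Rightarrow> nat \<Rightarrow> (nat \<Rightarrow> nat) \<Rightarrow> bool" where
  "is_beam_split_pattern fc B M N n Xi \<longleftrightarrow>
     (\<forall>m\<in>{1..M}. Xi m \<in> {1..N} \<and>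
        (\<forall>n1\<in>{1..N}.
           \<bar>subcarrier_freq fc B M m / fc * angle_sample N n - angle_sample N (Xi m)\<bar>
           \<le> \<bar>subcarrier_freq fc B M m / fc * angle_sample N n - angle_sample N n1\<bar>))"

definition complex_gaussian :: "real \<Rightarrow> complex measure" where
  "complex_gaussian s =
     distr (density lborel (normal_density 0 (sqrt (s / 2)))
            \<Otimes>\<^sub>M density lborel (normal_density 0 (sqrt (s / 2))))
           borel (\<lambda>(x, y). Complex x y)"

definition cgauss_vec :: "nat \<Rightarrow> real \<Rightarrow> (nat \<Rightarrow> complex) measure" where
  "cgauss_vec L s = PiM {1..L} (\<lambda>_. complex_gaussian s)"

end

theory Submission
  imports Defs
begin


definition gd :: "real \<Rightarrow> real \<Rightarrow> real" where
  "gd v x = normal_density 0 (sqrt (v / 2)) x"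

lemma gd_measurable[measurable]: "gd v \<in> borel_measurable borel"
  unfolding gd_def[abs_def] by measurable

lemma gd_nonneg[simp]: "0 \<le> gd v x" by (simp add: gd_def)

lemma gd_eq: "v > 0 \<Longrightarrow> gd v x = exp (- x\<^sup>2 / v) / sqrt (pi * v)"
  by (simp add: gd_def normal_density_def)

lemma prob_space_N1: "v > 0 \<Longrightarrow> prob_space (density lborel (gd v))"
  unfolding gd_def[abs_def] by (rule prob_space_normal_density) simp

lemma Complex_measurable[measurable]: "(\<lambda>(x, y). Complex x y) \<in> borel_measurable (borel \<Otimes>\<^sub>M borel)"
proof -
  have "(\<lambda>(x, y). Complex x y) = (\<lambda>p. complex_of_real (fst p) + \<i> * complex_of_real (snd p))"
    by (auto simp: Complex_eq)
  then show ?thesis by simp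
qed

lemma Complex_measurable2[measurable (raw)]:
  "f \<in> borel_measurable M \<Longrightarrow> g \<in> borel_measurable M \<Longrightarrow> (\<lambda>x. Complex (f x) (g x)) \<in> borel_measurable M"
  by (simp add: Complex_eq)

lemma sets_CN[measurable_cong, simp]: "sets (complex_gaussian v) = sets borel"
  by (simp add: complex_gaussian_def)

lemma space_CN[simp]: "space (complex_gaussian v) = UNIV"
  by (simp add: complex_gaussian_def)

lemma prob_space_CN: "v > 0 \<Longrightarrow> prob_space (complex_gaussian v)"
  unfolding complex_gaussian_def
  apply (rule prob_space.prob_space_distr)
  apply (rule prob_space_pair)
  using prob_space_normal_density apply simp_all
  done

lemma CN_nn:
  assumes f[measurable]: "f \<in> borel_measurable borel" and v: "v > 0"
  shows "(\<integral>\<^sup>+z. f z \<partial>complex_gaussian v) =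
    (\<integral>\<^sup>+x. \<integral>\<^sup>+y. ennreal (gd v x * gd v y) * f (Complex x y) \<partial>lborel \<partial>lborel)"
proof -
  interpret N: prob_space "density lborel (gd v)" by (rule prob_space_N1[OF v])
  interpret P: pair_prob_space "density lborel (gd v)" "density lborel (gd v)" ..
  have "(\<integral>\<^sup>+z. f z \<partial>complex_gaussian v) =
     (\<integral>\<^sup>+p. f (Complex (fst p) (snd p)) \<partial>(density lborel (gd v) \<Otimes>\<^sub>M density lborel (gd v)))"
    unfolding complex_gaussian_def gd_def[symmetric, abs_def]
    by (subst nn_integral_distr) (auto simp: case_prod_beta)
  also have "\<dots> = (\<integral>\<^sup>+x. \<integral>\<^sup>+y. f (Complex x y) \<partial>density lborel (gd v) \<partial>density lborel (gd v))"
    by (subst N.nn_integral_fst[symmetric]) auto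
  also have "\<dots> = (\<integral>\<^sup>+x. \<integral>\<^sup>+y. ennreal (gd v x * gd v y) * f (Complex x y) \<partial>lborel \<partial>lborel)"
    by (simp add: nn_integral_density nn_integral_cmult[symmetric] ennreal_mult mult.assoc)
  finally show ?thesis .
qed



lemma measure_eq_nnI:
  assumes "sets M = sets borel" "sets N = sets borel"
  and "\<And>A. A \<in> sets borel \<Longrightarrow> (\<integral>\<^sup>+z. indicator A z \<partial>M) = (\<integral>\<^sup>+z. indicator A z \<partial>N)"
  shows "M = N"
proof (rule measure_eqI)
  show "sets M = sets N" using assms by simp
  fix A assume A: "A \<in> sets M"
  have "emeasure M A = (\<integral>\<^sup>+z. indicator A z \<partial>M)" using A by simp
  also have "\<dots> = (\<integral>\<^sup>+z. indicator A z \<partial>N)" using A assms by simp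
  also have "\<dots> = emeasure N A" using A assms by simp
  finally show "emeasure M A = emeasure N A" .
qed

lemma gd_scale: "v > 0 \<Longrightarrow> r > 0 \<Longrightarrow> r * gd (r\<^sup>2 * v) (r * x) = gd v x"
  apply (simp add: gd_eq real_sqrt_mult)
  by (simp add: power_mult_distrib)

lemma CN_scale:
  assumes f[measurable]: "f \<in> borel_measurable borel" and v: "v > 0" and r: "r > 0"
  shows "(\<integral>\<^sup>+z. f (complex_of_real r * z) \<partial>complex_gaussian v) = (\<integral>\<^sup>+z. f z \<partial>complex_gaussian (r\<^sup>2 * v))"
proof -
  have rv: "r\<^sup>2 * v > 0" using v r by simp
  have "(\<integral>\<^sup>+z. f z \<partial>complex_gaussian (r\<^sup>2 * v)) =
    (\<integral>\<^sup>+x. \<integral>\<^sup>+y. ennreal (gd (r\<^sup>2 * v) x * gd (r\<^sup>2 * v) y) * f (Complex x y) \<partial>lborel \<partial>lborel)"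
    by (rule CN_nn[OF f rv])
  also have "\<dots> = ennreal r * (\<integral>\<^sup>+x. \<integral>\<^sup>+y. ennreal (gd (r\<^sup>2 * v) (r * x) * gd (r\<^sup>2 * v) y) * f (Complex (r * x) y) \<partial>lborel \<partial>lborel)"
    using r apply (subst nn_integral_real_affine[where c=r and t=0])
      apply measurable
    done
  also have "\<dots> = ennreal r * (\<integral>\<^sup>+x. ennreal r * \<integral>\<^sup>+y. ennreal (gd (r\<^sup>2 * v) (r * x) * gd (r\<^sup>2 * v) (r * y)) * f (Complex (r * x) (r * y)) \<partial>lborel \<partial>lborel)"
    apply (rule arg_cong[where f="\<lambda>X. ennreal r * X"])
    apply (rule nn_integral_cong)
    using r apply (subst nn_integral_real_affine[where c=r and t=0])
      apply measurable
    done
  also have "\<dots> = (\<integral>\<^sup>+x. \<integral>\<^sup>+y. ennreal (gd v x * gd v y) * f (complex_of_real r * Complex x y) \<partial>lborel \<partial>lborel)"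
    apply (subst nn_integral_cmult[symmetric], measurable)
    apply (rule nn_integral_cong)
    apply (subst nn_integral_cmult[symmetric], measurable)
    apply (subst nn_integral_cmult[symmetric], measurable)
    apply (rule nn_integral_cong)
    subgoal for x y
    proof -
      have e: "r * gd (r\<^sup>2 * v) (r * x) = gd v x" "r * gd (r\<^sup>2 * v) (r * y) = gd v y"
        using gd_scale[OF v r] by auto
      have c: "Complex (r * x) (r * y) = complex_of_real r * Complex x y" by (simp add: complex_eq_iff)
      have g: "\<And>A B C :: real. A \<ge> 0 \<Longrightarrow> B \<ge> 0 \<Longrightarrow> C \<ge> 0 \<Longrightarrow> ennreal A * (ennreal A * ennreal (B * C)) = ennreal (A * B * (A * C))"
        by (simp add: ennreal_mult'[symmetric] mult_ac)
      have "ennreal r * (ennreal r * (ennreal (gd (r\<^sup>2 * v) (r * x) * gd (r\<^sup>2 * v) (r * y))))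
          = ennreal (r * gd (r\<^sup>2 * v) (r * x) * (r * gd (r\<^sup>2 * v) (r * y)))"
        using r by (intro g) auto
      then show ?thesis unfolding e c by (simp add: mult.assoc[symmetric])
    qed
    done
  also have "\<dots> = (\<integral>\<^sup>+z. f (complex_of_real r * z) \<partial>complex_gaussian v)"
    by (rule CN_nn[symmetric, OF _ v]) measurable
  finally show ?thesis ..
qed

lemma distr_CN_scale:
  assumes v: "v > 0" and r: "r > 0"
  shows "distr (complex_gaussian v) borel (\<lambda>z. complex_of_real r * z) = complex_gaussian (r\<^sup>2 * v)"
proof (rule measure_eq_nnI)
  fix A :: "complex set" assume A[measurable]: "A \<in> sets borel"
  show "(\<integral>\<^sup>+z. indicator A z \<partial>distr (complex_gaussian v) borel (\<lambda>z. complex_of_real r * z)) =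
    (\<integral>\<^sup>+z. indicator A z \<partial>complex_gaussian (r\<^sup>2 * v))"
    using CN_scale[OF _ v r, of "indicator A"] by (subst nn_integral_distr) auto
qed auto


lemma add2_pointwise:
  fixes a b p q v1 v2 x y :: real
  assumes a: "a > 0" and b: "b > 0"
  defines "a' \<equiv> a + (p\<^sup>2 + q\<^sup>2) * b"
  defines "\<tau> \<equiv> a * b / a'"
  defines "\<mu>1 \<equiv> \<tau> * (p * v1 + q * v2) / a" and "\<mu>2 \<equiv> \<tau> * (p * v2 - q * v1) / a"
  shows "gd b x * gd b y * gd a (v1 - (p * x - q * y)) * gd a (v2 - (q * x + p * y)) =
     gd a' v1 * gd a' v2 * (gd \<tau> (x - \<mu>1) * gd \<tau> (y - \<mu>2))"
proof -
  have a': "a' > 0" unfolding a'_def using a b by (intro add_pos_nonneg) auto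
  have t: "\<tau> > 0" unfolding \<tau>_def using a b a' by simp
  have c: "sqrt (pi * b) * sqrt (pi * b) * sqrt (pi * a) * sqrt (pi * a) = sqrt (pi * a') * sqrt (pi * a') * (sqrt (pi * \<tau>) * sqrt (pi * \<tau>))"
    using a b a' t by (simp add: \<tau>_def)
  have e: "- x\<^sup>2 / b + - y\<^sup>2 / b + - (v1 - (p * x - q * y))\<^sup>2 / a + - (v2 - (q * x + p * y))\<^sup>2 / a
     = - v1\<^sup>2 / a' + - v2\<^sup>2 / a' + (- (x - \<mu>1)\<^sup>2 / \<tau> + - (y - \<mu>2)\<^sup>2 / \<tau>)"
    using a b a' t unfolding \<mu>1_def \<mu>2_def \<tau>_def
    apply (simp add: field_simps)
    unfolding a'_def
    apply (simp add: power2_eq_square)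
    apply (simp add: algebra_simps)
    done
  have c2: "pi * b * (pi * a) = pi * a' * (pi * \<tau>)" using a' by (simp add: \<tau>_def)
  have gen: "\<And>A B C D s1 s2 :: real. A / s1 * (B / s1) * (C / s2) * (D / s2) = A * B * C * D / (s1 * s1 * (s2 * s2))"
    by simp
  have L: "gd b x * gd b y * gd a (v1 - (p * x - q * y)) * gd a (v2 - (q * x + p * y)) =
     exp (- x\<^sup>2 / b + - y\<^sup>2 / b + - (v1 - (p * x - q * y))\<^sup>2 / a + - (v2 - (q * x + p * y))\<^sup>2 / a) / (pi * b * (pi * a))"
    unfolding gd_eq[OF a] gd_eq[OF b] exp_add gen using a b by simp
  have R: "gd a' v1 * gd a' v2 * (gd \<tau> (x - \<mu>1) * gd \<tau> (y - \<mu>2)) =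
     exp (- v1\<^sup>2 / a' + - v2\<^sup>2 / a' + (- (x - \<mu>1)\<^sup>2 / \<tau> + - (y - \<mu>2)\<^sup>2 / \<tau>)) / (pi * a' * (pi * \<tau>))"
    unfolding gd_eq[OF a'] gd_eq[OF t] exp_add mult.assoc[symmetric] gen using a' t by simp
  show ?thesis unfolding L R e c2 ..
qed
lemma gd_shift_int: "\<tau> > 0 \<Longrightarrow> (\<integral>\<^sup>+x. ennreal (gd \<tau> (x - \<mu>)) \<partial>lborel) = 1"
proof -
  assume t: "\<tau> > 0"
  have "gd \<tau> (x - \<mu>) = normal_density \<mu> (sqrt (\<tau> / 2)) x" for x
    by (simp add: gd_def normal_density_def)
  then have "(\<integral>\<^sup>+x. ennreal (gd \<tau> (x - \<mu>)) \<partial>lborel) = (\<integral>\<^sup>+x. ennreal (normal_density \<mu> (sqrt (\<tau> / 2)) x) \<partial>lborel)"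
    by simp
  also have "\<dots> = 1"
    using t by (subst nn_integral_eq_integral) (auto intro!: integrable_normal_density simp: integral_normal_density)
  finally show ?thesis .
qed

lemma add2_inner:
  fixes a b p q v1 v2 :: real
  assumes a: "a > 0" and b: "b > 0"
  shows "(\<integral>\<^sup>+x. \<integral>\<^sup>+y. ennreal (gd b x * gd b y * gd a (v1 - (p * x - q * y)) * gd a (v2 - (q * x + p * y))) \<partial>lborel \<partial>lborel)
     = ennreal (gd (a + (p\<^sup>2 + q\<^sup>2) * b) v1 * gd (a + (p\<^sup>2 + q\<^sup>2) * b) v2)"
proof -
  define a' where "a' = a + (p\<^sup>2 + q\<^sup>2) * b"
  define \<tau> where "\<tau> = a * b / a'"
  define \<mu>1 where "\<mu>1 = \<tau> * (p * v1 + q * v2) / a"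
  define \<mu>2 where "\<mu>2 = \<tau> * (p * v2 - q * v1) / a"
  have a': "a' > 0" unfolding a'_def using a b by (intro add_pos_nonneg) auto
  have t: "\<tau> > 0" unfolding \<tau>_def using a b a' by simp
  have "(\<integral>\<^sup>+x. \<integral>\<^sup>+y. ennreal (gd b x * gd b y * gd a (v1 - (p * x - q * y)) * gd a (v2 - (q * x + p * y))) \<partial>lborel \<partial>lborel)
    = (\<integral>\<^sup>+x. \<integral>\<^sup>+y. ennreal (gd a' v1 * gd a' v2) * (ennreal (gd \<tau> (x - \<mu>1)) * ennreal (gd \<tau> (y - \<mu>2))) \<partial>lborel \<partial>lborel)"
  proof -
    have pw: "\<And>x y. gd b x * gd b y * gd a (v1 - (p * x - q * y)) * gd a (v2 - (q * x + p * y)) =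
     gd a' v1 * gd a' v2 * (gd \<tau> (x - \<mu>1) * gd \<tau> (y - \<mu>2))"
      unfolding a'_def \<tau>_def \<mu>1_def \<mu>2_def by (rule add2_pointwise[OF a b])
    show ?thesis unfolding pw by (simp add: ennreal_mult[symmetric])
  qed
  also have "\<dots> = ennreal (gd a' v1 * gd a' v2) * ((\<integral>\<^sup>+x. ennreal (gd \<tau> (x - \<mu>1)) \<partial>lborel) * (\<integral>\<^sup>+y. ennreal (gd \<tau> (y - \<mu>2)) \<partial>lborel))"
    by (simp add: nn_integral_cmult nn_integral_multc mult.assoc)
  also have "\<dots> = ennreal (gd a' v1 * gd a' v2)"
    using t by (simp add: gd_shift_int)
  finally show ?thesis unfolding a'_def .
qed
lemma CN_translate:
  assumes f[measurable]: "f \<in> borel_measurable borel"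
  shows "(\<integral>\<^sup>+x. \<integral>\<^sup>+y. ennreal (gd a x * gd a y) * f (Complex x y + w) \<partial>lborel \<partial>lborel) =
    (\<integral>\<^sup>+v1. \<integral>\<^sup>+v2. ennreal (gd a (v1 - Re w) * gd a (v2 - Im w)) * f (Complex v1 v2) \<partial>lborel \<partial>lborel)"
proof -
  have "(\<integral>\<^sup>+v1. \<integral>\<^sup>+v2. ennreal (gd a (v1 - Re w) * gd a (v2 - Im w)) * f (Complex v1 v2) \<partial>lborel \<partial>lborel)
    = (\<integral>\<^sup>+x. \<integral>\<^sup>+v2. ennreal (gd a (Re w + 1 * x - Re w) * gd a (v2 - Im w)) * f (Complex (Re w + 1 * x) v2) \<partial>lborel \<partial>lborel)"
    by (subst nn_integral_real_affine[where c=1 and t="Re w"]) auto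
  also have "\<dots> = (\<integral>\<^sup>+x. \<integral>\<^sup>+y. ennreal (gd a (Re w + 1 * x - Re w) * gd a (Im w + 1 * y - Im w)) * f (Complex (Re w + 1 * x) (Im w + 1 * y)) \<partial>lborel \<partial>lborel)"
    by (rule nn_integral_cong, subst nn_integral_real_affine[where c=1 and t="Im w"]) auto
  also have "\<dots> = (\<integral>\<^sup>+x. \<integral>\<^sup>+y. ennreal (gd a x * gd a y) * f (Complex x y + w) \<partial>lborel \<partial>lborel)"
  proof (intro nn_integral_cong)
    fix x y :: real
    have "Complex (Re w + 1 * x) (Im w + 1 * y) = Complex x y + w" by (simp add: complex_eq_iff)
    then show "ennreal (gd a (Re w + 1 * x - Re w) * gd a (Im w + 1 * y - Im w)) * f (Complex (Re w + 1 * x) (Im w + 1 * y)) =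
        ennreal (gd a x * gd a y) * f (Complex x y + w)" by simp
  qed
  finally show ?thesis ..
qed

lemma CN_add_nn:
  assumes f[measurable]: "f \<in> borel_measurable borel" and a: "a > 0" and b: "b > 0"
  shows "(\<integral>\<^sup>+w. f w \<partial>distr (complex_gaussian a \<Otimes>\<^sub>M complex_gaussian b) borel (\<lambda>(u, z). u + c * z))
    = (\<integral>\<^sup>+w. f w \<partial>complex_gaussian (a + (cmod c)\<^sup>2 * b))"
proof -
  interpret A: prob_space "complex_gaussian a" by (rule prob_space_CN[OF a])
  interpret B: prob_space "complex_gaussian b" by (rule prob_space_CN[OF b])
  interpret AB: pair_prob_space "complex_gaussian a" "complex_gaussian b" ..
  define p where "p = Re c"
  define q where "q = Im c"
  have ab: "a + (cmod c)\<^sup>2 * b > 0" using a b by (intro add_pos_nonneg) auto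
  have "(\<integral>\<^sup>+w. f w \<partial>distr (complex_gaussian a \<Otimes>\<^sub>M complex_gaussian b) borel (\<lambda>(u, z). u + c * z))
     = (\<integral>\<^sup>+uz. f (fst uz + c * snd uz) \<partial>(complex_gaussian a \<Otimes>\<^sub>M complex_gaussian b))"
    by (subst nn_integral_distr) (auto simp: case_prod_beta)
  also have "\<dots> = (\<integral>\<^sup>+z. \<integral>\<^sup>+u. f (u + c * z) \<partial>complex_gaussian a \<partial>complex_gaussian b)"
    by (subst AB.nn_integral_snd[symmetric]) auto
  also have "\<dots> = (\<integral>\<^sup>+z. \<integral>\<^sup>+v1. \<integral>\<^sup>+v2. ennreal (gd a (v1 - Re (c * z)) * gd a (v2 - Im (c * z))) * f (Complex v1 v2) \<partial>lborel \<partial>lborel \<partial>complex_gaussian b)"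
    by (intro nn_integral_cong) (simp add: CN_nn[OF _ a] CN_translate)
  also have "\<dots> = (\<integral>\<^sup>+x2. \<integral>\<^sup>+y2. ennreal (gd b x2 * gd b y2) *
       (\<integral>\<^sup>+v1. \<integral>\<^sup>+v2. ennreal (gd a (v1 - (p * x2 - q * y2)) * gd a (v2 - (q * x2 + p * y2))) * f (Complex v1 v2) \<partial>lborel \<partial>lborel) \<partial>lborel \<partial>lborel)"
    by (subst CN_nn[OF _ b]) (auto simp: p_def q_def ac_simps)
  also have "\<dots> = (\<integral>\<^sup>+x2. \<integral>\<^sup>+y2. \<integral>\<^sup>+v1. \<integral>\<^sup>+v2. ennreal (gd b x2 * gd b y2 * gd a (v1 - (p * x2 - q * y2)) * gd a (v2 - (q * x2 + p * y2))) * f (Complex v1 v2) \<partial>lborel \<partial>lborel \<partial>lborel \<partial>lborel)"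
    by (auto intro!: nn_integral_cong simp: nn_integral_cmult[symmetric] ennreal_mult mult.assoc)
  also have "\<dots> = (\<integral>\<^sup>+x2. \<integral>\<^sup>+v1. \<integral>\<^sup>+y2. \<integral>\<^sup>+v2. ennreal (gd b x2 * gd b y2 * gd a (v1 - (p * x2 - q * y2)) * gd a (v2 - (q * x2 + p * y2))) * f (Complex v1 v2) \<partial>lborel \<partial>lborel \<partial>lborel \<partial>lborel)"
    by (rule nn_integral_cong, rule lborel_pair.Fubini') measurable
  also have "\<dots> = (\<integral>\<^sup>+x2. \<integral>\<^sup>+v1. \<integral>\<^sup>+v2. \<integral>\<^sup>+y2. ennreal (gd b x2 * gd b y2 * gd a (v1 - (p * x2 - q * y2)) * gd a (v2 - (q * x2 + p * y2))) * f (Complex v1 v2) \<partial>lborel \<partial>lborel \<partial>lborel \<partial>lborel)"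
    by (rule nn_integral_cong, rule nn_integral_cong, rule lborel_pair.Fubini') measurable
  also have "\<dots> = (\<integral>\<^sup>+v1. \<integral>\<^sup>+x2. \<integral>\<^sup>+v2. \<integral>\<^sup>+y2. ennreal (gd b x2 * gd b y2 * gd a (v1 - (p * x2 - q * y2)) * gd a (v2 - (q * x2 + p * y2))) * f (Complex v1 v2) \<partial>lborel \<partial>lborel \<partial>lborel \<partial>lborel)"
    by (rule lborel_pair.Fubini') measurable
  also have "\<dots> = (\<integral>\<^sup>+v1. \<integral>\<^sup>+v2. \<integral>\<^sup>+x2. \<integral>\<^sup>+y2. ennreal (gd b x2 * gd b y2 * gd a (v1 - (p * x2 - q * y2)) * gd a (v2 - (q * x2 + p * y2))) * f (Complex v1 v2) \<partial>lborel \<partial>lborel \<partial>lborel \<partial>lborel)"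
    by (rule nn_integral_cong, rule lborel_pair.Fubini') measurable
  also have "\<dots> = (\<integral>\<^sup>+v1. \<integral>\<^sup>+v2. (\<integral>\<^sup>+x2. \<integral>\<^sup>+y2. ennreal (gd b x2 * gd b y2 * gd a (v1 - (p * x2 - q * y2)) * gd a (v2 - (q * x2 + p * y2))) \<partial>lborel \<partial>lborel) * f (Complex v1 v2) \<partial>lborel \<partial>lborel)"
    by (auto intro!: nn_integral_cong simp: nn_integral_multc[symmetric])
  also have "\<dots> = (\<integral>\<^sup>+v1. \<integral>\<^sup>+v2. ennreal (gd (a + (cmod c)\<^sup>2 * b) v1 * gd (a + (cmod c)\<^sup>2 * b) v2) * f (Complex v1 v2) \<partial>lborel \<partial>lborel)"
    by (simp add: add2_inner[OF a b] p_def q_def cmod_power2)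
  also have "\<dots> = (\<integral>\<^sup>+w. f w \<partial>complex_gaussian (a + (cmod c)\<^sup>2 * b))"
    by (rule CN_nn[symmetric, OF f ab])
  finally show ?thesis .
qed
lemma distr_CN_add:
  assumes a: "a > 0" and b: "b > 0"
  shows "distr (complex_gaussian a \<Otimes>\<^sub>M complex_gaussian b) borel (\<lambda>(u, z). u + c * z) = complex_gaussian (a + (cmod c)\<^sup>2 * b)"
proof (rule measure_eq_nnI)
  fix A :: "complex set" assume A[measurable]: "A \<in> sets borel"
  show "(\<integral>\<^sup>+z. indicator A z \<partial>distr (complex_gaussian a \<Otimes>\<^sub>M complex_gaussian b) borel (\<lambda>(u, z). u + c * z)) =
    (\<integral>\<^sup>+z. indicator A z \<partial>complex_gaussian (a + (cmod c)\<^sup>2 * b))"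
    by (rule CN_add_nn[OF _ a b]) measurable
qed auto


lemma nn_even:
  fixes h :: "real \<Rightarrow> ennreal"
  assumes h[measurable]: "h \<in> borel_measurable borel" and ev: "\<And>x. h (- x) = h x"
  shows "(\<integral>\<^sup>+x. h x \<partial>lborel) = 2 * (\<integral>\<^sup>+x. h x * indicator {0..} x \<partial>lborel)"
proof -
  have "(\<integral>\<^sup>+x. h x \<partial>lborel) = (\<integral>\<^sup>+x. h x * indicator {0..} x + h x * indicator {..<0} x \<partial>lborel)"
    by (rule nn_integral_cong) (auto split: split_indicator)
  also have "\<dots> = (\<integral>\<^sup>+x. h x * indicator {0..} x \<partial>lborel) + (\<integral>\<^sup>+x. h x * indicator {..<0} x \<partial>lborel)"
    by (rule nn_integral_add) auto
  also have "(\<integral>\<^sup>+x. h x * indicator {..<0} x \<partial>lborel) = (\<integral>\<^sup>+x. h (0 + -1 * x) * indicator {..<0} (0 + -1 * x) \<partial>lborel)"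
    by (subst nn_integral_real_affine[where c="-1" and t=0]) auto
  also have "\<dots> = (\<integral>\<^sup>+x. h x * indicator {0<..} x \<partial>lborel)"
    by (rule nn_integral_cong) (auto simp: ev split: split_indicator)
  also have "\<dots> = (\<integral>\<^sup>+x. h x * indicator {0..} x \<partial>lborel)"
    by (intro nn_integral_cong_AE eventually_mono[OF AE_lborel_singleton[of 0]]) (auto split: split_indicator)
  finally show ?thesis by (simp add: mult_2)
qed

lemma int_arctan: "(\<integral>\<^sup>+s. ennreal (1 / (1 + s\<^sup>2)) \<partial>lborel) = ennreal pi"
proof -
  have "(\<integral>\<^sup>+s. ennreal (1 / (1 + s\<^sup>2)) \<partial>lborel) = 2 * (\<integral>\<^sup>+s. ennreal (1 / (1 + s\<^sup>2)) * indicator {0..} s \<partial>lborel)"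
    by (rule nn_even) auto
  also have "(\<integral>\<^sup>+s. ennreal (1 / (1 + s\<^sup>2)) * indicator {0..} s \<partial>lborel) = ennreal (pi / 2 - arctan 0)"
  proof (rule nn_integral_FTC_atLeast)
    show "(arctan \<longlongrightarrow> pi / 2) at_top" by (rule tendsto_arctan_at_top)
  qed (auto intro!: derivative_eq_intros simp: add_nonneg_eq_0_iff field_simps power2_eq_square)
  also have "2 * ennreal (pi / 2 - arctan 0) = ennreal pi"
  proof -
    show ?thesis using ennreal_mult[of 2 "pi/2"] by simp
  qed
  finally show ?thesis .
qed

lemma int_x_exp:
  fixes k r :: real
  assumes k: "k > 0" and r: "r \<ge> 0"
  shows "(\<integral>\<^sup>+x. ennreal (\<bar>x\<bar> * exp (- k * x\<^sup>2)) * indicator {x. r < x\<^sup>2} x \<partial>lborel) = ennreal (exp (- k * r) / k)"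
proof -
  have "(\<integral>\<^sup>+x. ennreal (\<bar>x\<bar> * exp (- k * x\<^sup>2)) * indicator {x. r < x\<^sup>2} x \<partial>lborel)
    = 2 * (\<integral>\<^sup>+x. ennreal (\<bar>x\<bar> * exp (- k * x\<^sup>2)) * indicator {x. r < x\<^sup>2} x * indicator {0..} x \<partial>lborel)"
    by (rule nn_even) (auto split: split_indicator)
  also have "(\<integral>\<^sup>+x. ennreal (\<bar>x\<bar> * exp (- k * x\<^sup>2)) * indicator {x. r < x\<^sup>2} x * indicator {0..} x \<partial>lborel)
     = (\<integral>\<^sup>+x. ennreal (x * exp (- k * x\<^sup>2)) * indicator {sqrt r..} x \<partial>lborel)"
  proof (intro nn_integral_cong_AE eventually_mono[OF AE_lborel_singleton[of "sqrt r"]] impI)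
    fix x :: real assume x: "x \<noteq> sqrt r"
    show "ennreal (\<bar>x\<bar> * exp (- k * x\<^sup>2)) * indicator {x. r < x\<^sup>2} x * indicator {0..} x =
        ennreal (x * exp (- k * x\<^sup>2)) * indicator {sqrt r..} x"
    proof (cases "x \<ge> 0")
      case True
      have "r < x\<^sup>2 \<longleftrightarrow> sqrt r \<le> x"
      proof
        assume "r < x\<^sup>2" then have "sqrt r < sqrt (x\<^sup>2)" by (rule real_sqrt_less_mono)
        then show "sqrt r \<le> x" using True by simp
      next
        assume "sqrt r \<le> x" then have "sqrt r < x" using x by simp
        then have "(sqrt r)\<^sup>2 < x\<^sup>2" using r by (intro power_strict_mono) auto
        then show "r < x\<^sup>2" using r by simp
      qed
      then show ?thesis using True by (auto split: split_indicator)
    next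
      case False
      then have "\<not> sqrt r \<le> x" using r real_sqrt_ge_zero[of r] by linarith
      then show ?thesis using False by (auto split: split_indicator)
    qed
  qed
  also have "\<dots> = ennreal (0 - (- exp (- k * (sqrt r)\<^sup>2) / (2 * k)))"
  proof (rule nn_integral_FTC_atLeast)
    have "((\<lambda>x. - exp (- k * x\<^sup>2) / (2 * k)) \<longlongrightarrow> - 0 / (2 * k)) at_top"
      apply (intro tendsto_intros filterlim_compose[OF exp_at_bot] filterlim_tendsto_neg_mult_at_bot[OF tendsto_const])
      using k apply simp
      apply (intro filterlim_pow_at_top filterlim_ident)
      using k apply simp_all
      done
    then show "((\<lambda>x. - exp (- k * x\<^sup>2) / (2 * k)) \<longlongrightarrow> 0) at_top" by simp
    fix x :: real assume "sqrt r \<le> x"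
    then have "x \<ge> 0" using r real_sqrt_ge_zero[of r] by linarith
    then show "0 \<le> x * exp (- k * x\<^sup>2)" by simp
    show "((\<lambda>x. - exp (- k * x\<^sup>2) / (2 * k)) has_real_derivative x * exp (- k * x\<^sup>2)) (at x)"
      using k by (auto intro!: derivative_eq_intros simp: field_simps)
  qed auto
  also have "2 * ennreal (0 - (- exp (- k * (sqrt r)\<^sup>2) / (2 * k))) = ennreal (exp (- k * r) / k)"
    using k r ennreal_mult[of 2 "exp (- (k * r)) / (2 * k)"] by simp
  finally show ?thesis .
qed

lemma CN_tail:
  assumes v: "v > 0" and t: "t \<ge> 0"
  shows "emeasure (complex_gaussian v) {z. t < (cmod z)\<^sup>2} = ennreal (exp (- t / v))"
proof -
  have S[measurable]: "{z::complex. t < (cmod z)\<^sup>2} \<in> sets borel" by measurable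
  define G where "G x y = ennreal (exp (- (x\<^sup>2 + y\<^sup>2) / v) / (pi * v)) * indicator {y. t < x\<^sup>2 + y\<^sup>2} y" for x y :: real
  have G_m[measurable]: "(\<lambda>(x, y). G x y) \<in> borel_measurable (borel \<Otimes>\<^sub>M borel)"
  proof -
    have "(\<lambda>(x, y). G x y) = (\<lambda>p. ennreal (exp (- ((fst p)\<^sup>2 + (snd p)\<^sup>2) / v) / (pi * v)) * indicator {p. t < (fst p)\<^sup>2 + (snd p)\<^sup>2} p)"
      by (auto simp: G_def fun_eq_iff split: split_indicator)
    also have "\<dots> \<in> borel_measurable (borel \<Otimes>\<^sub>M borel)" by measurable
    finally show ?thesis .
  qed
  have "emeasure (complex_gaussian v) {z. t < (cmod z)\<^sup>2} = (\<integral>\<^sup>+z. indicator {z. t < (cmod z)\<^sup>2} z \<partial>complex_gaussian v)"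
    by (simp add: nn_integral_indicator)
  also have "\<dots> = (\<integral>\<^sup>+x. \<integral>\<^sup>+y. ennreal (gd v x * gd v y) * indicator {z. t < (cmod z)\<^sup>2} (Complex x y) \<partial>lborel \<partial>lborel)"
    by (rule CN_nn[OF _ v]) measurable
  also have "\<dots> = (\<integral>\<^sup>+x. \<integral>\<^sup>+y. G x y \<partial>lborel \<partial>lborel)"
  proof (intro nn_integral_cong)
    fix x y :: real
    have "gd v x * gd v y = exp (- (x\<^sup>2 + y\<^sup>2) / v) / (pi * v)"
      using v by (simp add: gd_eq exp_add[symmetric] diff_divide_distrib add_divide_distrib)
    moreover have "(cmod (Complex x y))\<^sup>2 = x\<^sup>2 + y\<^sup>2" by (simp add: cmod_power2)
    ultimately show "ennreal (gd v x * gd v y) * indicator {z. t < (cmod z)\<^sup>2} (Complex x y) = G x y"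
      by (simp add: G_def split: split_indicator)
  qed
  also have "\<dots> = (\<integral>\<^sup>+x. \<integral>\<^sup>+s. ennreal \<bar>x\<bar> * G x (0 + x * s) \<partial>lborel \<partial>lborel)"
  proof (rule nn_integral_cong_AE, rule eventually_mono[OF AE_lborel_singleton[of 0]])
    fix x :: real assume x: "x \<noteq> 0"
    show "(\<integral>\<^sup>+y. G x y \<partial>lborel) = (\<integral>\<^sup>+s. ennreal \<bar>x\<bar> * G x (0 + x * s) \<partial>lborel)"
      using x by (subst nn_integral_real_affine[where c=x and t=0]) (auto simp: nn_integral_cmult)
  qed
  also have "\<dots> = (\<integral>\<^sup>+s. \<integral>\<^sup>+x. ennreal \<bar>x\<bar> * G x (0 + x * s) \<partial>lborel \<partial>lborel)"
    by (rule lborel_pair.Fubini'[symmetric]) measurable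
  also have "\<dots> = (\<integral>\<^sup>+s. ennreal (1 / (pi * v)) * \<integral>\<^sup>+x. ennreal (\<bar>x\<bar> * exp (- ((1 + s\<^sup>2) / v) * x\<^sup>2)) * indicator {x. t / (1 + s\<^sup>2) < x\<^sup>2} x \<partial>lborel \<partial>lborel)"
  proof (rule nn_integral_cong)
    fix s :: real
    have p: "1 + s\<^sup>2 > 0" by (simp add: add_pos_nonneg)
    have "ennreal \<bar>x\<bar> * G x (0 + x * s) = ennreal (1 / (pi * v)) * (ennreal (\<bar>x\<bar> * exp (- ((1 + s\<^sup>2) / v) * x\<^sup>2)) * indicator {x. t / (1 + s\<^sup>2) < x\<^sup>2} x)" for x
    proof -
      have i: "t < x\<^sup>2 + (x * s)\<^sup>2 \<longleftrightarrow> t / (1 + s\<^sup>2) < x\<^sup>2"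
        using p by (simp add: pos_divide_less_eq power_mult_distrib algebra_simps)
      have e: "exp (- (x\<^sup>2 + (x * s)\<^sup>2) / v) / (pi * v) = 1 / (pi * v) * (exp (- ((1 + s\<^sup>2) / v) * x\<^sup>2))"
        by (simp add: power_mult_distrib algebra_simps minus_divide_left)
      have "ennreal \<bar>x\<bar> * ennreal (exp (- (x\<^sup>2 + (x * s)\<^sup>2) / v) / (pi * v)) = ennreal (1 / (pi * v)) * ennreal (\<bar>x\<bar> * exp (- ((1 + s\<^sup>2) / v) * x\<^sup>2))"
        unfolding e using v by (simp add: ennreal_mult[symmetric] mult_ac)
      then show ?thesis using i by (simp add: G_def mult.assoc split: split_indicator)
    qed
    then show "(\<integral>\<^sup>+x. ennreal \<bar>x\<bar> * G x (0 + x * s) \<partial>lborel) = ennreal (1 / (pi * v)) * \<integral>\<^sup>+x. ennreal (\<bar>x\<bar> * exp (- ((1 + s\<^sup>2) / v) * x\<^sup>2)) * indicator {x. t / (1 + s\<^sup>2) < x\<^sup>2} x \<partial>lborel"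
      by (simp add: nn_integral_cmult)
  qed
  also have "\<dots> = (\<integral>\<^sup>+s. ennreal (exp (- t / v) / pi) * ennreal (1 / (1 + s\<^sup>2)) \<partial>lborel)"
  proof (rule nn_integral_cong)
    fix s :: real
    have p: "1 + s\<^sup>2 > 0" by (simp add: add_pos_nonneg)
    have k: "(1 + s\<^sup>2) / v > 0" using p v by simp
    have r: "t / (1 + s\<^sup>2) \<ge> 0" using p t by simp
    have "ennreal (1 / (pi * v)) * ennreal (exp (- ((1 + s\<^sup>2) / v) * (t / (1 + s\<^sup>2))) / ((1 + s\<^sup>2) / v))
      = ennreal (1 / (pi * v) * (exp (- ((1 + s\<^sup>2) / v) * (t / (1 + s\<^sup>2))) / ((1 + s\<^sup>2) / v)))"
      using v p by (intro ennreal_mult[symmetric]) auto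
    also have "1 / (pi * v) * (exp (- ((1 + s\<^sup>2) / v) * (t / (1 + s\<^sup>2))) / ((1 + s\<^sup>2) / v)) = exp (- t / v) / pi * (1 / (1 + s\<^sup>2))"
    proof -
      have nz: "v + v * s\<^sup>2 > 0" using v by (simp add: add_pos_nonneg)
      have ee: "- ((1 + s\<^sup>2) / v) * (t / (1 + s\<^sup>2)) = - t / v" using v p nz by (simp add: field_simps)
      show ?thesis unfolding ee using v p by (simp add: field_simps)
    qed
    also have "ennreal (exp (- t / v) / pi * (1 / (1 + s\<^sup>2))) = ennreal (exp (- t / v) / pi) * ennreal (1 / (1 + s\<^sup>2))"
      using p by (intro ennreal_mult) auto
    finally have X: "ennreal (1 / (pi * v)) * ennreal (exp (- ((1 + s\<^sup>2) / v) * (t / (1 + s\<^sup>2))) / ((1 + s\<^sup>2) / v)) =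
      ennreal (exp (- t / v) / pi) * ennreal (1 / (1 + s\<^sup>2))" .
    show "ennreal (1 / (pi * v)) * (\<integral>\<^sup>+x. ennreal (\<bar>x\<bar> * exp (- ((1 + s\<^sup>2) / v) * x\<^sup>2)) * indicator {x. t / (1 + s\<^sup>2) < x\<^sup>2} x \<partial>lborel)
       = ennreal (exp (- t / v) / pi) * ennreal (1 / (1 + s\<^sup>2))"
      unfolding int_x_exp[OF k r] by (rule X)
  qed
  also have "\<dots> = ennreal (exp (- t / v) / pi) * ennreal pi"
    by (simp add: nn_integral_cmult int_arctan)
  also have "\<dots> = ennreal (exp (- t / v))"
    by (simp add: ennreal_mult[symmetric])
  finally show ?thesis .
qed


lemma prob_space_cgv: "s > 0 \<Longrightarrow> prob_space (cgauss_vec L s)"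
  unfolding cgauss_vec_def by (intro prob_space_PiM prob_space_CN)

lemma sets_cgv: "sets (cgauss_vec L s) = sets (PiM {1..L} (\<lambda>_. borel))"
  unfolding cgauss_vec_def by (intro sets_PiM_cong) auto

lemma coords_indep:
  assumes s: "s > 0" and L: "L \<ge> 1"
  shows "prob_space.indep_vars (cgauss_vec L s) (\<lambda>_. borel) (\<lambda>i z. z i) {1..L}"
proof -
  interpret Q: prob_space "cgauss_vec L s" by (rule prob_space_cgv[OF s])
  have rv: "(\<lambda>z. z i) \<in> measurable (cgauss_vec L s) borel" if i: "i \<in> {1..L}" for i
  proof -
    have "(\<lambda>z. z i) \<in> measurable (PiM {1..L} (\<lambda>_. complex_gaussian s)) (complex_gaussian s)"
      by (rule measurable_component_singleton[OF i])
    then show ?thesis unfolding cgauss_vec_def by (simp add: measurable_cong_sets[OF refl sets_CN])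
  qed
  have d1: "distr (cgauss_vec L s) (PiM {1..L} (\<lambda>_. borel)) (\<lambda>x. \<lambda>i\<in>{1..L}. x i) = cgauss_vec L s"
  proof -
    have "distr (cgauss_vec L s) (PiM {1..L} (\<lambda>_. borel)) (\<lambda>x. \<lambda>i\<in>{1..L}. x i) =
        distr (cgauss_vec L s) (cgauss_vec L s) (\<lambda>x. x)"
      apply (rule distr_cong)
        apply (rule refl)
       apply (simp add: sets_cgv)
      apply (auto simp: cgauss_vec_def space_PiM PiE_def extensional_def)
      done
    then show ?thesis by simp
  qed
  have d2: "(PiM {1..L} (\<lambda>i. distr (cgauss_vec L s) borel (\<lambda>z. z i))) = cgauss_vec L s"
    unfolding cgauss_vec_def
  proof (rule PiM_cong)
    fix i assume i: "i \<in> {1..L}"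
    have "distr (PiM {1..L} (\<lambda>_. complex_gaussian s)) borel (\<lambda>z. z i) = distr (PiM {1..L} (\<lambda>_. complex_gaussian s)) (complex_gaussian s) (\<lambda>z. z i)"
      by (rule distr_cong) auto
    also have "\<dots> = complex_gaussian s"
      using i by (intro distr_PiM_component prob_space_CN s)
    finally show "distr (PiM {1..L} (\<lambda>_. complex_gaussian s)) borel (\<lambda>z. z i) = complex_gaussian s" .
  qed simp
  show ?thesis
  proof (rule Q.indep_vars_iff_distr_eq_PiM'[THEN iffD2])
    show "{1..L} \<noteq> {}" using L by simp
    show "\<And>i. i \<in> {1..L} \<Longrightarrow> (\<lambda>z. z i) \<in> measurable (cgauss_vec L s) borel" using rv by auto
    show "distr (cgauss_vec L s) (PiM {1..L} (\<lambda>_. borel)) (\<lambda>x. \<lambda>i\<in>{1..L}. x i) = (PiM {1..L} (\<lambda>i. distr (cgauss_vec L s) borel (\<lambda>z. z i)))"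
      unfolding d1 d2 ..
  qed
qed

lemma partial_sum_law:
  fixes d :: "nat \<Rightarrow> complex"
  assumes s: "s > 0" and r: "r > 0" and d1: "d 1 = complex_of_real r"
  shows "1 \<le> k \<Longrightarrow> k \<le> L \<Longrightarrow> distr (cgauss_vec L s) borel (\<lambda>z. \<Sum>i\<in>{1..k}. d i * z i) = complex_gaussian (s * (\<Sum>i\<in>{1..k}. (cmod (d i))\<^sup>2))"
proof (induction k rule: nat_induct_at_least)
  case base
  interpret Q: prob_space "cgauss_vec L s" by (rule prob_space_cgv[OF s])
  have d1': "d (Suc 0) = complex_of_real r" using d1 by simp
  have "distr (cgauss_vec L s) borel (\<lambda>z. \<Sum>i\<in>{1..1}. d i * z i) = distr (distr (cgauss_vec L s) borel (\<lambda>z. z 1)) borel (\<lambda>w. complex_of_real r * w)"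
    using base d1 by (subst distr_distr) (auto simp: cgauss_vec_def comp_def)
  also have "distr (cgauss_vec L s) borel (\<lambda>z. z 1) = complex_gaussian s"
  proof -
    have "distr (cgauss_vec L s) borel (\<lambda>z. z 1) = distr (cgauss_vec L s) (complex_gaussian s) (\<lambda>z. z 1)"
      by (rule distr_cong) auto
    also have "\<dots> = complex_gaussian s"
      unfolding cgauss_vec_def using base by (intro distr_PiM_component prob_space_CN s) auto
    finally show ?thesis .
  qed
  also have "distr (complex_gaussian s) borel (\<lambda>w. complex_of_real r * w) = complex_gaussian (r\<^sup>2 * s)"
    by (rule distr_CN_scale[OF s r])
  finally show ?case using r by (simp add: d1' mult.commute)
next
  case (Suc k)
  interpret Q: prob_space "cgauss_vec L s" by (rule prob_space_cgv[OF s])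
  have L: "L \<ge> 1" using Suc by simp
  define a where "a = s * (\<Sum>i\<in>{1..k}. (cmod (d i))\<^sup>2)"
  have a: "a > 0"
  proof -
    have "(\<Sum>i\<in>{1..k}. (cmod (d i))\<^sup>2) \<ge> (cmod (d 1))\<^sup>2"
      using Suc(1) by (intro member_le_sum) auto
    moreover have "(cmod (d 1))\<^sup>2 > 0" using r d1 by simp
    ultimately have "(\<Sum>i\<in>{1..k}. (cmod (d i))\<^sup>2) > 0" by linarith
    then show ?thesis unfolding a_def using s by (intro mult_pos_pos)
  qed
  have IH: "distr (cgauss_vec L s) borel (\<lambda>z. \<Sum>i\<in>{1..k}. d i * z i) = complex_gaussian a"
    using Suc by (simp add: a_def)
  have zk: "distr (cgauss_vec L s) borel (\<lambda>z. z (Suc k)) = complex_gaussian s"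
  proof -
    have "distr (cgauss_vec L s) borel (\<lambda>z. z (Suc k)) = distr (cgauss_vec L s) (complex_gaussian s) (\<lambda>z. z (Suc k))"
      by (rule distr_cong) auto
    also have "\<dots> = complex_gaussian s"
      unfolding cgauss_vec_def using Suc by (intro distr_PiM_component prob_space_CN s) auto
    finally show ?thesis .
  qed
  have ind: "Q.indep_var borel (\<lambda>z. \<Sum>i\<in>{1..k}. d i * z i) borel (\<lambda>z. z (Suc k))"
  proof -
    have "Q.indep_var
      borel ((\<lambda>f. \<Sum>i\<in>{1..k}. d i * f i) \<circ> (\<lambda>\<omega>. restrict (\<lambda>i. \<omega> i) {1..k}))
      borel ((\<lambda>f. f (Suc k)) \<circ> (\<lambda>\<omega>. restrict (\<lambda>i. \<omega> i) {Suc k}))"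
      using Suc by (intro Q.indep_var_compose[OF Q.indep_var_restrict[OF coords_indep[OF s L]]]) auto
    also have "((\<lambda>f. \<Sum>i\<in>{1..k}. d i * f i) \<circ> (\<lambda>\<omega>. restrict (\<lambda>i. \<omega> i) {1..k})) = (\<lambda>z. \<Sum>i\<in>{1..k}. d i * z i)"
      by (auto simp: fun_eq_iff)
    also have "((\<lambda>f. f (Suc k)) \<circ> (\<lambda>\<omega>. restrict (\<lambda>i. \<omega> i) {Suc k})) = (\<lambda>z. z (Suc k))"
      by (auto simp: fun_eq_iff)
    finally show ?thesis .
  qed
  have "distr (cgauss_vec L s) borel (\<lambda>z. \<Sum>i\<in>{1..Suc k}. d i * z i) =
     distr (distr (cgauss_vec L s) (borel \<Otimes>\<^sub>M borel) (\<lambda>z. (\<Sum>i\<in>{1..k}. d i * z i, z (Suc k)))) borel (\<lambda>(u, w). u + d (Suc k) * w)"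
  proof -
    have rvp: "(\<lambda>z. (\<Sum>i\<in>{1..k}. d i * z i, z (Suc k))) \<in> measurable (cgauss_vec L s) (borel \<Otimes>\<^sub>M borel)"
      using Q.indep_var_rv1[OF ind] Q.indep_var_rv2[OF ind] by (rule measurable_Pair)
    show ?thesis using rvp by (subst distr_distr) (auto simp: comp_def)
  qed
  also have "distr (cgauss_vec L s) (borel \<Otimes>\<^sub>M borel) (\<lambda>z. (\<Sum>i\<in>{1..k}. d i * z i, z (Suc k))) = complex_gaussian a \<Otimes>\<^sub>M complex_gaussian s"
    using ind unfolding Q.indep_var_distribution_eq IH zk by simp
  also have "distr (complex_gaussian a \<Otimes>\<^sub>M complex_gaussian s) borel (\<lambda>(u, w). u + d (Suc k) * w) = complex_gaussian (a + (cmod (d (Suc k)))\<^sup>2 * s)"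
    by (rule distr_CN_add[OF a s])
  also have "a + (cmod (d (Suc k)))\<^sup>2 * s = s * (\<Sum>i\<in>{1..Suc k}. (cmod (d i))\<^sup>2)"
    using Suc by (simp add: a_def algebra_simps)
  finally show ?case .
qed



lemma exp_bound:
  fixes \<alpha> :: real assumes a: "\<alpha> > 0"
  shows "exp (- \<alpha>) \<le> 0.8 * \<alpha> powr (-1/2) * exp (-\<alpha>/2)"
proof -
  define u where "u = sqrt \<alpha>"
  have u: "u > 0" "u\<^sup>2 = \<alpha>" using a by (auto simp: u_def)
  have "\<alpha> \<le> exp (\<alpha> - 1)" using exp_ge_add_one_self[of "\<alpha> - 1"] by simp
  also have "exp (\<alpha> - 1) = exp \<alpha> / exp 1" by (simp add: exp_diff)
  also have "\<dots> \<le> exp \<alpha> / 2"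
    using exp_ge_add_one_self[of 1] by (intro divide_left_mono) auto
  finally have h: "\<alpha> \<le> exp \<alpha> / 2" .
  have e2: "exp (-\<alpha>/2) * exp (-\<alpha>/2) = exp (-\<alpha>)" by (simp add: exp_add[symmetric])
  have e3: "exp \<alpha> * exp (-\<alpha>) = 1" by (simp add: exp_add[symmetric])
  have "(u * exp (-\<alpha>/2))\<^sup>2 = u\<^sup>2 * (exp (-\<alpha>/2) * exp (-\<alpha>/2))"
    by (simp add: power2_eq_square mult_ac)
  also have "\<dots> = \<alpha> * exp (-\<alpha>)" unfolding e2 u(2) ..
  also have "\<dots> \<le> exp \<alpha> / 2 * exp (-\<alpha>)" using h by (intro mult_right_mono) auto
  also have "\<dots> = 1/2" using e3 by simp
  finally have "(u * exp (-\<alpha>/2))\<^sup>2 \<le> 1/2" .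
  moreover have "(1/2::real) \<le> 0.8\<^sup>2" by (simp add: power2_eq_square)
  ultimately have "(u * exp (-\<alpha>/2))\<^sup>2 \<le> 0.8\<^sup>2" by (rule order_trans)
  then have k: "u * exp (-\<alpha>/2) \<le> 0.8"
    by (rule power2_le_imp_le) simp
  have p: "\<alpha> powr (-1/2) = 1 / u"
  proof -
    have "\<alpha> powr (-1/2) = inverse (\<alpha> powr (1/2))" using powr_minus[of \<alpha> "1/2"] by simp
    also have "\<alpha> powr (1/2) = u" using a by (simp add: powr_half_sqrt u_def)
    finally show ?thesis by (simp only: inverse_eq_divide)
  qed
  have "exp (- \<alpha>) = exp (-\<alpha>/2) * exp (-\<alpha>/2)" using e2 by simp
  also have "\<dots> \<le> (0.8 / u) * exp (-\<alpha>/2)"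
  proof (rule mult_right_mono)
    show "exp (-\<alpha>/2) \<le> 0.8 / u" using k u by (simp add: pos_le_divide_eq mult.commute)
  qed simp
  finally show ?thesis unfolding p by simp
qed

lemma core_bound:
  fixes c :: "nat \<Rightarrow> complex" and L N :: nat and s \<alpha> :: real
  assumes s: "s > 0" and L: "L \<ge> 1" and LN: "L \<le> N"
    and c: "\<forall>i\<in>{1..L}. cmod (c i) = 1 / sqrt (real N)"
    and a: "\<alpha> > 0"
  shows "measure (cgauss_vec L s) {z \<in> space (cgauss_vec L s). (cmod (\<Sum>i\<in>{1..L}. c i * z i))\<^sup>2 \<le> s * \<alpha>}
     \<ge> 1 - 0.8 * \<alpha> powr (-1/2) * exp (-\<alpha>/2)"
proof -
  interpret Q: prob_space "cgauss_vec L s" by (rule prob_space_cgv[OF s])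
  have N: "N \<ge> 1" using L LN by simp
  have c1: "cmod (c 1) = 1 / sqrt (real N)" using c L by auto
  define r where "r = cmod (c 1)"
  have r: "r > 0" using c1 N by (simp add: r_def)
  define e where "e = c 1 / complex_of_real r"
  have e: "cmod e = 1" using r by (simp add: e_def r_def norm_divide)
  define d where "d i = cnj e * c i" for i
  have d1: "d 1 = complex_of_real r"
  proof -
    have "d 1 = cnj (c 1) * c 1 / complex_of_real r" using r by (simp add: d_def e_def)
    also have "cnj (c 1) * c 1 = complex_of_real (r\<^sup>2)" using complex_norm_square[of "c 1"] by (simp add: r_def mult.commute)
    finally show ?thesis using r by (simp add: power2_eq_square)
  qed
  have cd: "cmod (\<Sum>i\<in>{1..L}. d i * z i) = cmod (\<Sum>i\<in>{1..L}. c i * z i)" for z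
  proof -
    have "(\<Sum>i\<in>{1..L}. d i * z i) = cnj e * (\<Sum>i\<in>{1..L}. c i * z i)"
      by (simp add: d_def sum_distrib_left mult.assoc)
    then show ?thesis using e by (simp add: norm_mult)
  qed
  define w where "w = s * (\<Sum>i\<in>{1..L}. (cmod (d i))\<^sup>2)"
  have dn: "(cmod (d i))\<^sup>2 = 1 / real N" if "i \<in> {1..L}" for i
    using c that e N by (simp add: d_def norm_mult power_divide)
  have w_eq: "w = s * (real L / real N)"
    unfolding w_def using dn by simp
  have q: "real L / real N > 0" "real L / real N \<le> 1" using L LN N by auto
  have w: "w > 0" "w \<le> s" unfolding w_eq using q s
    by (simp_all only: mult_pos_pos) (rule mult_left_le, simp_all)
  have law: "distr (cgauss_vec L s) borel (\<lambda>z. \<Sum>i\<in>{1..L}. d i * z i) = complex_gaussian w"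
    unfolding w_def by (rule partial_sum_law[where d=d and k=L and L=L, OF s r d1 L order_refl])
  have meas: "(\<lambda>z. \<Sum>i\<in>{1..L}. d i * z i) \<in> borel_measurable (cgauss_vec L s)"
  proof -
    have "(\<lambda>z. z i) \<in> borel_measurable (cgauss_vec L s)" if "i \<in> {1..L}" for i
    proof -
      have "(\<lambda>z. z i) \<in> measurable (PiM {1..L} (\<lambda>_. complex_gaussian s)) (complex_gaussian s)"
        by (rule measurable_component_singleton[OF that])
      then show ?thesis unfolding cgauss_vec_def by (simp add: measurable_cong_sets[OF refl sets_CN])
    qed
    then show ?thesis by (intro borel_measurable_sum borel_measurable_times) auto
  qed
  have "measure (cgauss_vec L s) {z \<in> space (cgauss_vec L s). (cmod (\<Sum>i\<in>{1..L}. c i * z i))\<^sup>2 \<le> s * \<alpha>}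
     = measure (cgauss_vec L s) ((\<lambda>z. \<Sum>i\<in>{1..L}. d i * z i) -` {u. (cmod u)\<^sup>2 \<le> s * \<alpha>} \<inter> space (cgauss_vec L s))"
    by (rule arg_cong[where f="measure _"]) (use cd in auto)
  also have "\<dots> = measure (complex_gaussian w) {u. (cmod u)\<^sup>2 \<le> s * \<alpha>}"
    by (subst law[symmetric], subst measure_distr) (use meas in auto)
  also have "\<dots> = 1 - measure (complex_gaussian w) {u. s * \<alpha> < (cmod u)\<^sup>2}"
  proof -
    interpret W: prob_space "complex_gaussian w" by (rule prob_space_CN[OF w(1)])
    have eqs: "{u. (cmod u)\<^sup>2 \<le> s * \<alpha>} = space (complex_gaussian w) - {u. s * \<alpha> < (cmod u)\<^sup>2}" by auto
    have ev: "{u. s * \<alpha> < (cmod u)\<^sup>2} \<in> W.events" by simp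
    show ?thesis unfolding eqs by (rule W.prob_compl[OF ev])
  qed
  also have "measure (complex_gaussian w) {u. s * \<alpha> < (cmod u)\<^sup>2} = exp (- (s * \<alpha>) / w)"
    using CN_tail[OF w(1), of "s * \<alpha>"] s a by (simp add: measure_def)
  finally have eq: "measure (cgauss_vec L s) {z \<in> space (cgauss_vec L s). (cmod (\<Sum>i\<in>{1..L}. c i * z i))\<^sup>2 \<le> s * \<alpha>} = 1 - exp (- (s * \<alpha>) / w)" .
  have "exp (- (s * \<alpha>) / w) \<le> exp (- \<alpha>)"
  proof -
    have "\<alpha> \<le> s * \<alpha> / w" using w s a by (simp add: field_simps mult_left_mono)
    then show ?thesis by simp
  qed
  also have "\<dots> \<le> 0.8 * \<alpha> powr (-1/2) * exp (-\<alpha>/2)" by (rule exp_bound[OF a])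
  finally show ?thesis unfolding eq by simp
qed
theorem lemma4:
  fixes P NRF N M n :: nat
    and fc B \<sigma>2 \<alpha> :: real
    and A :: "nat \<Rightarrow> nat \<Rightarrow> complex"
    and Xi :: "nat \<Rightarrow> nat"
    and \<Omega> :: "'w measure"
    and Nz :: "'w \<Rightarrow> nat \<Rightarrow> nat \<Rightarrow> complex"
  assumes "P > 0" "NRF > 0" "N > 0" "M > 0" "NRF * P \<le> N"
    and "fc > 0" "B > 0"
    and "\<forall>i\<in>{1..NRF * P}. \<forall>j\<in>{1..N}. cmod (A i j) = 1 / sqrt (real N)"
    and "n \<in> {1..N}"
    and "is_beam_split_pattern fc B M N n Xi"
    and "\<sigma>2 > 0"
    and "prob_space \<Omega>"
    and "prob_space.indep_vars \<Omega> (\<lambda>_. PiM {1..NRF * P} (\<lambda>_. (borel :: complex measure)))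
           (\<lambda>m \<omega>. \<lambda>i\<in>{1..NRF * P}. Nz \<omega> i m) {1..M}"
    and "\<forall>m\<in>{1..M}. distr \<Omega> (PiM {1..NRF * P} (\<lambda>_. borel))
           (\<lambda>\<omega>. \<lambda>i\<in>{1..NRF * P}. Nz \<omega> i m) = cgauss_vec (NRF * P) \<sigma>2"
    and "\<alpha> > 0" "0.8 * \<alpha> powr (-1/2) * exp (-\<alpha>/2) \<le> 1"
  shows "measure \<Omega> {\<omega> \<in> space \<Omega>. \<forall>m\<in>{1..M}.
            (cmod (\<Sum>i\<in>{1..NRF * P}. cnj (A i (Xi m)) * Nz \<omega> i m))\<^sup>2 \<le> \<sigma>2 * \<alpha>}
         \<ge> (1 - 0.8 * \<alpha> powr (-1/2) * exp (-\<alpha>/2)) ^ M"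
proof -
  interpret O: prob_space \<Omega> by (rule assms(12))
  define L where "L = NRF * P"
  define I where "I = {1..L}"
  define q where "q = 0.8 * \<alpha> powr (-1/2) * exp (-\<alpha>/2)"
  have L1: "L \<ge> 1" using assms(1,2) by (simp add: L_def)
  have LN: "L \<le> N" using assms(5) by (simp add: L_def)
  define X where "X m \<omega> = (\<lambda>i\<in>I. Nz \<omega> i m)" for m \<omega>
  define c where "c m i = cnj (A i (Xi m))" for m i
  define f where "f m z = (cmod (\<Sum>i\<in>I. c m i * z i))\<^sup>2" for m z
  define B where "B m = {z \<in> space (PiM I (\<lambda>_. borel)). f m z \<le> \<sigma>2 * \<alpha>}" for m
  have ind: "O.indep_vars (\<lambda>_. PiM I (\<lambda>_. borel)) X {1..M}"
    using assms(13) unfolding X_def I_def L_def .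
  have fm: "f m \<in> borel_measurable (PiM I (\<lambda>_. (borel :: complex measure)))" for m
  proof -
    have "(\<lambda>z. z i) \<in> borel_measurable (PiM I (\<lambda>_. (borel :: complex measure)))" if "i \<in> I" for i
      by (rule measurable_component_singleton[OF that])
    then have "(\<lambda>z. \<Sum>i\<in>I. c m i * z i) \<in> borel_measurable (PiM I (\<lambda>_. (borel :: complex measure)))"
      by (intro borel_measurable_sum borel_measurable_times) auto
    then show ?thesis unfolding f_def[abs_def] by measurable
  qed
  have Bs: "B m \<in> sets (PiM I (\<lambda>_. borel))" for m
  proof -
    have "B m = f m -` {..\<sigma>2 * \<alpha>} \<inter> space (PiM I (\<lambda>_. borel))" by (auto simp: B_def)
    also have "\<dots> \<in> sets (PiM I (\<lambda>_. borel))" by (rule measurable_sets[OF fm]) simp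
    finally show ?thesis .
  qed
  have Xm: "X m \<in> measurable \<Omega> (PiM I (\<lambda>_. borel))" if "m \<in> {1..M}" for m
    using ind that unfolding O.indep_vars_def by auto
  have Xi: "Xi m \<in> {1..N}" if "m \<in> {1..M}" for m
    using assms(10) that unfolding is_beam_split_pattern_def by auto
  have sp: "space (cgauss_vec L \<sigma>2) = space (PiM I (\<lambda>_. borel))"
    by (rule sets_eq_imp_space_eq) (simp add: sets_cgv I_def)
  have each: "O.prob (X m -` B m \<inter> space \<Omega>) \<ge> 1 - q" if m: "m \<in> {1..M}" for m
  proof -
    have "O.prob (X m -` B m \<inter> space \<Omega>) = measure (distr \<Omega> (PiM I (\<lambda>_. borel)) (X m)) (B m)"
      by (rule measure_distr[symmetric, OF Xm[OF m] Bs])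
    also have "distr \<Omega> (PiM I (\<lambda>_. borel)) (X m) = cgauss_vec L \<sigma>2"
      using assms(14) m unfolding X_def I_def L_def by auto
    also have Beq: "B m = {z \<in> space (cgauss_vec L \<sigma>2). (cmod (\<Sum>i\<in>{1..L}. c m i * z i))\<^sup>2 \<le> \<sigma>2 * \<alpha>}"
      unfolding sp B_def f_def I_def ..
    have "measure (cgauss_vec L \<sigma>2) (B m) \<ge> 1 - q"
      unfolding q_def Beq
    proof (rule core_bound[OF assms(11) L1 LN _ assms(15)])
      show "\<forall>i\<in>{1..L}. cmod (c m i) = 1 / sqrt (real N)"
        using assms(8) Xi[OF m] by (auto simp: c_def L_def)
    qed
    then show ?thesis using calculation by simp
  qed
  have "{\<omega> \<in> space \<Omega>. \<forall>m\<in>{1..M}.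
            (cmod (\<Sum>i\<in>{1..NRF * P}. cnj (A i (Xi m)) * Nz \<omega> i m))\<^sup>2 \<le> \<sigma>2 * \<alpha>}
        = (\<Inter>m\<in>{1..M}. X m -` B m \<inter> space \<Omega>)"
  proof -
    have "f m (X m \<omega>) = (cmod (\<Sum>i\<in>{1..NRF * P}. cnj (A i (Xi m)) * Nz \<omega> i m))\<^sup>2" for m \<omega>
      unfolding f_def X_def c_def I_def L_def by (intro arg_cong[where f="\<lambda>x. (cmod x)\<^sup>2"] sum.cong) auto
    moreover have "X m \<omega> \<in> space (PiM I (\<lambda>_. borel))" for m \<omega>
      by (auto simp: X_def space_PiM)
    ultimately show ?thesis using assms(4) by (auto simp: B_def)
  qed
  then have "measure \<Omega> {\<omega> \<in> space \<Omega>. \<forall>m\<in>{1..M}.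
            (cmod (\<Sum>i\<in>{1..NRF * P}. cnj (A i (Xi m)) * Nz \<omega> i m))\<^sup>2 \<le> \<sigma>2 * \<alpha>}
      = (\<Prod>m\<in>{1..M}. O.prob (X m -` B m \<inter> space \<Omega>))"
    using assms(4) by (simp only:) (rule O.indep_varsD[OF ind], auto simp: Bs)
  also have "\<dots> \<ge> (\<Prod>m\<in>{1..M}. 1 - q)"
    using assms(16) each unfolding q_def by (intro prod_mono) auto
  finally show ?thesis unfolding q_def by simp
qed

end
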